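(* Let $W(x)=e^{-x^2}Z(x)$, $x\in\mathbb{R}$, be an $N\times N$ Hermite-type weight matrix such that $W(x)=W(-x)$, and let $U(y)=y^{1/2}e^{-y}Z(\sqrt{y})$, $y\in(0,\infty)$, be the associated Laguerre-type weight with parameter $\alpha=\tfrac12$. Let $D\in\mathcal{D}(W)$, let $E$ be the differential operator defined by $Ex=xD$, i.e. $x\,(F\cdot E)(x)=((xF)\cdot D)(x)$ for all smooth matrix functions $F$, and let $\tilde E$ be the operator in the variable $y=x^2$ determined by $(F\cdot E)(\sqrt y)=(\tilde F\cdot\tilde E)(y)$ where $\tilde F(y)=F(\sqrt y)$. Then $\tilde E\in\mathcal{D}(U)$.
   Context: An $N\times N$ weight matrix on an interval $I$ is integrable, positive definite a.e., with exponential decay at infinity and finite moments; it defines $\langle P,Q\rangle_W=\int_I P(x)W(x)Q(x)^*dx$ and a unique sequence of monic orthogonal matrix polynomials $\{P_n\}_{n\ge0}$. Differential operators $\sum_i \frac{d^i}{dx^i}F_i(x)$ act on the right: $P\cdot\sum_i \frac{d^i}{dx^i}F_i=\sum_i P^{(i)}F_i$, and compositions act successively left to right. $\mathcal{D}(W)$ is the algebra of such operators with matrix polynomial coefficients for which there are constant matrices $\Lambda_n$ with $P_n\cdot D=\Lambda_nP_n$ for all $n\ge0$. Hermite-type weight: weight on $\mathbb{R}$ of the form $e^{-x^2}Z(x)$; Laguerre-type weight: weight on $(0,\infty)$ of the form $y^\alpha e^{-y}Z(y)$, $\alpha>-1$. *)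

theory Defs
  imports "HOL-Analysis.Analysis"
begin

definition mat_adj :: "complex^'n^'n \<Rightarrow> complex^'n^'n" where
  "mat_adj A = (\<chi> i j. cnj (A $ j $ i))"

definition pos_def_mat :: "complex^'n^'n \<Rightarrow> bool" where
  "pos_def_mat A \<longleftrightarrow> mat_adj A = A \<and>
     (\<forall>v::complex^'n. v \<noteq> 0 \<longrightarrow>
        (\<Sum>i\<in>UNIV. \<Sum>j\<in>UNIV. cnj (v $ i) * A $ i $ j * v $ j) \<in> \<real> \<and>
        0 < Re (\<Sum>i\<in>UNIV. \<Sum>j\<in>UNIV. cnj (v $ i) * A $ i $ j * v $ j))"

definition weight_matrix :: "(real \<Rightarrow> complex^'n^'n) \<Rightarrow> real set \<Rightarrow> bool" where
  "weight_matrix W I \<longleftrightarrow> is_interval I \<and>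
     (\<forall>k::nat. set_integrable lborel I (\<lambda>x. (x ^ k) *\<^sub>R W x)) \<and>
     (AE x in lborel. x \<in> I \<longrightarrow> pos_def_mat (W x)) \<and>
     (\<exists>c C R. 0 < c \<and> (\<forall>x\<in>I. R \<le> \<bar>x\<bar> \<longrightarrow> norm (W x) \<le> C * exp (- c * \<bar>x\<bar>)))"

definition mat_poly_le :: "(real \<Rightarrow> complex^'n^'n) \<Rightarrow> nat \<Rightarrow> bool" where
  "mat_poly_le F n \<longleftrightarrow> (\<exists>C. \<forall>x. F x = (\<Sum>i\<le>n. (x ^ i) *\<^sub>R C i))"

definition mat_poly :: "(real \<Rightarrow> complex^'n^'n) \<Rightarrow> bool" where
  "mat_poly F \<longleftrightarrow> (\<exists>n. mat_poly_le F n)"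

definition monic_mat_poly :: "(real \<Rightarrow> complex^'n^'n) \<Rightarrow> nat \<Rightarrow> bool" where
  "monic_mat_poly F n \<longleftrightarrow> (\<exists>C. C n = mat 1 \<and> (\<forall>x. F x = (\<Sum>i\<le>n. (x ^ i) *\<^sub>R C i)))"

definition mip :: "(real \<Rightarrow> complex^'n^'n) \<Rightarrow> real set \<Rightarrow>
    (real \<Rightarrow> complex^'n^'n) \<Rightarrow> (real \<Rightarrow> complex^'n^'n) \<Rightarrow> complex^'n^'n" where
  "mip W I P Q = (LINT x:I|lborel. P x ** W x ** mat_adj (Q x))"

definition monic_OP :: "(real \<Rightarrow> complex^'n^'n) \<Rightarrow> real set \<Rightarrow>
    (nat \<Rightarrow> real \<Rightarrow> complex^'n^'n) \<Rightarrow> bool" where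
  "monic_OP W I P \<longleftrightarrow> (\<forall>n. monic_mat_poly (P n) n) \<and>
     (\<forall>n m. n \<noteq> m \<longrightarrow> mip W I (P n) (P m) = 0)"

definition vderiv_iter :: "nat \<Rightarrow> (real \<Rightarrow> complex^'n^'n) \<Rightarrow> real \<Rightarrow> complex^'n^'n" where
  "vderiv_iter i F = ((\<lambda>f x. vector_derivative f (at x)) ^^ i) F"

definition smooth_mat :: "(real \<Rightarrow> complex^'n^'n) \<Rightarrow> bool" where
  "smooth_mat F \<longleftrightarrow>
     (\<forall>i x. (vderiv_iter i F has_vector_derivative vderiv_iter (Suc i) F x) (at x))"

text \<open>A differential operator sum_{i<=k} d^i/dx^i G_i(x), acting on the right:
  F . D = sum_{i<=k} F^(i) G_i.\<close>
definition dop_apply :: "nat \<Rightarrow> (nat \<Rightarrow> real \<Rightarrow> complex^'n^'n) \<Rightarrow>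
    (real \<Rightarrow> complex^'n^'n) \<Rightarrow> real \<Rightarrow> complex^'n^'n" where
  "dop_apply k G F x = (\<Sum>i\<le>k. vderiv_iter i F x ** G i x)"

definition in_DW :: "(real \<Rightarrow> complex^'n^'n) \<Rightarrow> real set \<Rightarrow> nat \<Rightarrow>
    (nat \<Rightarrow> real \<Rightarrow> complex^'n^'n) \<Rightarrow> bool" where
  "in_DW W I k G \<longleftrightarrow>
     (\<forall>i\<le>k. \<exists>p. mat_poly p \<and> (\<forall>x\<in>I. G i x = p x)) \<and>
     (\<exists>P. monic_OP W I P \<and>
        (\<forall>n. \<exists>\<Lambda>. \<forall>x\<in>I. dop_apply k G (P n) x = \<Lambda> ** P n x))"

end

theory Submission
  imports Defs
begin


type_synonym 'n cm = "complex^'n^'n"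

lemma mm_scaleR_right: "(A::complex^'n^'n) ** (c *\<^sub>R B) = c *\<^sub>R (A ** B)"
  by (simp add: matrix_matrix_mult_def vec_eq_iff scaleR_sum_right)

lemma mm_scaleR_left: "(c *\<^sub>R (A::complex^'n^'n)) ** B = c *\<^sub>R (A ** B)"
  by (simp add: matrix_matrix_mult_def vec_eq_iff scaleR_sum_right)

lemma mm_diff_right: "(A::complex^'n^'n) ** (B - C) = A ** B - A ** C"
  by (simp add: matrix_matrix_mult_def vec_eq_iff sum_subtractf algebra_simps)

lemma mm_diff_left: "((A::complex^'n^'n) - B) ** C = A ** C - B ** C"
  by (simp add: matrix_matrix_mult_def vec_eq_iff sum_subtractf algebra_simps)

lemma mm_add_left: "((A::complex^'n^'n) + B) ** (C::complex^'n^'n) = A ** C + B ** C"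
  by (simp add: matrix_matrix_mult_def vec_eq_iff sum.distrib algebra_simps)

lemma mm_sum_right: "(A::complex^'n^'n) ** (\<Sum>i\<in>S. (B i::complex^'n^'n)) = (\<Sum>i\<in>S. A ** B i)"
  by (induction S rule: infinite_finite_induct) (auto simp: matrix_add_ldistrib)

lemma mm_sum_left: "(\<Sum>i\<in>S. (B i::complex^'n^'n)) ** (A::complex^'n^'n) = (\<Sum>i\<in>S. B i ** A)"
  by (induction S rule: infinite_finite_induct) (auto simp: mm_add_left)

lemma adj_add: "mat_adj (A + B) = mat_adj A + mat_adj B"
  by (simp add: mat_adj_def vec_eq_iff)
lemma adj_diff: "mat_adj (A - B) = mat_adj A - mat_adj B"
  by (simp add: mat_adj_def vec_eq_iff)
lemma adj_zero: "mat_adj 0 = 0"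
  by (simp add: mat_adj_def vec_eq_iff)
lemma adj_scaleR: "mat_adj (c *\<^sub>R A) = c *\<^sub>R mat_adj A"
  by (simp add: mat_adj_def vec_eq_iff)
lemma adj_mult: "mat_adj ((A::complex^'n^'n) ** B) = mat_adj B ** mat_adj A"
  by (simp add: mat_adj_def vec_eq_iff matrix_matrix_mult_def mult.commute)
lemma adj_sum: "mat_adj (\<Sum>i\<in>S. B i) = (\<Sum>i\<in>S. mat_adj (B i))"
  by (induction S rule: infinite_finite_induct) (auto simp: adj_add adj_zero)

lemma bl_mm: "bounded_linear (\<lambda>X. (A::complex^'n^'n) ** (X::complex^'n^'n) ** (B::complex^'n^'n))"
proof -
  have "linear (\<lambda>X. (A::complex^'n^'n) ** X ** B)"
    by (rule linearI) (simp_all add: matrix_add_ldistrib mm_add_left mm_scaleR_right mm_scaleR_left)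

  then show ?thesis using linear_conv_bounded_linear by blast
qed



definition fall :: "nat \<Rightarrow> nat \<Rightarrow> real" where
  "fall p m = (\<Prod>k<m. real p - real k)"

lemma fall_0[simp]: "fall p 0 = 1" by (simp add: fall_def)

lemma fall_Suc: "fall p m * real (p - m) = fall p (Suc m)"
proof (cases "m \<le> p")
  case True then show ?thesis by (simp add: fall_def of_nat_diff)
next
  case False
  then have "fall p m = 0" unfolding fall_def by (intro prod_zero) (auto intro!: bexI[of _ p])
  moreover have "fall p (Suc m) = 0" unfolding fall_def using False by (intro prod_zero) (auto intro!: bexI[of _ p])
  ultimately show ?thesis by simp
qed

lemma fall_gt: "p < m \<Longrightarrow> fall p m = 0"
  unfolding fall_def by (intro prod_zero) (auto intro!: bexI[of _ p])

lemma fall_self_pos: "fall p p > 0"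
  unfolding fall_def by (intro prod_pos) auto

lemma deriv_mono:
  "((\<lambda>x. fall p m * x ^ (p - m)) has_real_derivative fall p (Suc m) * x ^ (p - Suc m)) (at x)"
proof -
  have "((\<lambda>x. fall p m * x ^ (p - m)) has_real_derivative fall p m * (real (p - m) * x ^ (p - m - Suc 0))) (at x)"
    by (rule DERIV_cmult[OF DERIV_pow])
  moreover have "fall p m * (real (p - m) * x ^ (p - m - Suc 0)) = fall p (Suc m) * x ^ (p - Suc m)"
    using fall_Suc[of p m] by (simp add: mult.assoc)
  ultimately show ?thesis by metis
qed

lemma hvd_gen:
  "((\<lambda>x. \<Sum>s\<in>S. (fall (e s) m * x ^ (e s - m)) *\<^sub>R (C s::'a::real_normed_vector))
     has_vector_derivative (\<Sum>s\<in>S. (fall (e s) (Suc m) * x ^ (e s - Suc m)) *\<^sub>R C s)) (at x)"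
  apply (rule has_vector_derivative_sum)
  using has_vector_derivative_scaleR[OF deriv_mono has_vector_derivative_const] by simp

lemma vderiv_Suc: "vderiv_iter (Suc m) F = (\<lambda>x. vector_derivative (vderiv_iter m F) (at x))"
  by (simp add: vderiv_iter_def)

lemma vderiv_gen:
  assumes "\<forall>x. F x = (\<Sum>s\<in>S. (x ^ (e s)) *\<^sub>R C s)"
  shows "vderiv_iter m F = (\<lambda>x. \<Sum>s\<in>S. (fall (e s) m * x ^ (e s - m)) *\<^sub>R C s)"
proof (induction m)
  case 0
  then show ?case using assms by (simp add: vderiv_iter_def fun_eq_iff)
next
  case (Suc m)
  show ?case unfolding vderiv_Suc Suc by (rule ext, rule vector_derivative_at[OF hvd_gen])
qed

lemma smooth_gen:
  assumes "\<forall>x. F x = (\<Sum>s\<in>S. (x ^ (e s)) *\<^sub>R C s)"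
  shows "smooth_mat F"
  unfolding smooth_mat_def vderiv_gen[OF assms] using hvd_gen by blast

lemma mat_poly_gen:
  assumes "finite S" "\<forall>x. F x = (\<Sum>s\<in>S. (x ^ (e s)) *\<^sub>R C s)"
  shows "mat_poly F"
proof -
  let ?n = "Max (e ` S)"
  let ?D = "\<lambda>k. \<Sum>s\<in>{s\<in>S. e s = k}. C s"
  have "F x = (\<Sum>k\<le>?n. x ^ k *\<^sub>R ?D k)" for x
  proof -
    have "F x = (\<Sum>k\<le>?n. \<Sum>s\<in>{s\<in>S. e s = k}. x ^ (e s) *\<^sub>R C s)"
      using assms by (subst sum.group) (auto simp: Max_ge)
    also have "\<dots> = (\<Sum>k\<le>?n. x ^ k *\<^sub>R ?D k)"
      by (auto intro!: sum.cong simp: scaleR_sum_right)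
    finally show ?thesis .
  qed
  then have "\<forall>x. F x = (\<Sum>k\<le>?n. x ^ k *\<^sub>R ?D k)" by blast
  then show ?thesis unfolding mat_poly_def mat_poly_le_def by (intro exI)
qed

lemma mat_poly_rep: "mat_poly F \<Longrightarrow> \<exists>n C. \<forall>x. F x = (\<Sum>i\<le>n. (x ^ i) *\<^sub>R C i)"
  unfolding mat_poly_def mat_poly_le_def by blast

lemma mat_poly_smooth: "mat_poly F \<Longrightarrow> smooth_mat F"
proof -
  assume "mat_poly F"
  obtain n C where F: "\<forall>x. F x = (\<Sum>i\<le>n. (x ^ i) *\<^sub>R C i)"
    using mat_poly_rep[OF \<open>mat_poly F\<close>] by blast
  show ?thesis by (rule smooth_gen[OF F])
qed

lemma mat_poly_vderiv: "mat_poly F \<Longrightarrow> mat_poly (vderiv_iter m F)"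
proof -
  assume "mat_poly F"
  obtain n C where F: "\<forall>x. F x = (\<Sum>i\<le>n. (x ^ i) *\<^sub>R C i)"
    using mat_poly_rep[OF \<open>mat_poly F\<close>] by blast
  have "\<forall>x. vderiv_iter m F x = (\<Sum>i\<le>n. x ^ (i - m) *\<^sub>R (fall i m *\<^sub>R C i))"
    unfolding vderiv_gen[OF F] by (simp add: mult.commute)
  then show ?thesis by (intro mat_poly_gen[where S="{..n}" and e="\<lambda>i. i - m" and C="\<lambda>i. fall i m *\<^sub>R C i"]) auto
qed

lemma mat_poly_const: "mat_poly (\<lambda>x. A)"
  by (rule mat_poly_gen[where S="{0::nat}" and e="\<lambda>_. 0" and C="\<lambda>_. A"]) auto

lemma sum_pad: "n \<le> N \<Longrightarrow> (\<Sum>i\<le>n. x ^ i *\<^sub>R (C i::'a::real_vector)) = (\<Sum>i\<le>N. x ^ i *\<^sub>R (if i \<le> n then C i else 0))"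
proof -
  assume "n \<le> N"
  then have s: "{j\<in>{..N}. j \<le> n} = {..n}" by auto
  have "(\<Sum>i\<le>N. x ^ i *\<^sub>R (if i \<le> n then C i else 0)) = (\<Sum>i\<le>N. if i \<le> n then x ^ i *\<^sub>R C i else 0)"
    by (rule sum.cong) auto
  also have "\<dots> = (\<Sum>i\<in>{j\<in>{..N}. j \<le> n}. x ^ i *\<^sub>R C i)"
    by (rule sum.inter_filter[symmetric]) simp
  finally show ?thesis using s by simp
qed

lemma mat_poly_add: "mat_poly F \<Longrightarrow> mat_poly G \<Longrightarrow> mat_poly (\<lambda>x. F x + G x)"
proof -
  assume "mat_poly F" "mat_poly G"
  obtain n C where F: "\<forall>x. F x = (\<Sum>i\<le>n. (x ^ i) *\<^sub>R C i)"
    using mat_poly_rep[OF \<open>mat_poly F\<close>] by blast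
  obtain m D where G: "\<forall>x. G x = (\<Sum>i\<le>m. (x ^ i) *\<^sub>R D i)"
    using mat_poly_rep[OF \<open>mat_poly G\<close>] by blast
  define N where "N = max n m"
  define C' where "C' i = (if i \<le> n then C i else 0) + (if i \<le> m then D i else 0)" for i
  have "F x + G x = (\<Sum>i\<le>N. (x ^ id i) *\<^sub>R C' i)" for x
  proof -
    have e1: "F x = (\<Sum>i\<le>N. x ^ i *\<^sub>R (if i \<le> n then C i else 0))"
      unfolding F[rule_format, of x] N_def by (rule sum_pad) simp
    have e2: "G x = (\<Sum>i\<le>N. x ^ i *\<^sub>R (if i \<le> m then D i else 0))"
      unfolding G[rule_format, of x] N_def by (rule sum_pad) simp
    show ?thesis unfolding e1 e2 C'_def id_def
      by (simp only: sum.distrib[symmetric] scaleR_add_right)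
  qed
  then have "\<forall>x. F x + G x = (\<Sum>i\<in>{..N}. (x ^ id i) *\<^sub>R C' i)" by blast
  then show ?thesis using mat_poly_gen[where S="{..N}" and F="\<lambda>x. F x + G x" and e=id and C="C'"] by blast
qed

lemma mat_poly_scaleR: "mat_poly F \<Longrightarrow> mat_poly (\<lambda>x. c *\<^sub>R F x)"
proof -
  assume "mat_poly F"
  obtain n C where F: "\<forall>x. F x = (\<Sum>i\<le>n. (x ^ i) *\<^sub>R C i)"
    using mat_poly_rep[OF \<open>mat_poly F\<close>] by blast
  have "\<forall>x. c *\<^sub>R F x = (\<Sum>i\<le>n. (x ^ i) *\<^sub>R (c *\<^sub>R C i))"
    unfolding F[rule_format] scaleR_sum_right by (intro allI sum.cong refl scaleR_left_commute)
  then show ?thesis using mat_poly_gen[where S="{..n}" and e=id and C="\<lambda>i. c *\<^sub>R C i" and F="\<lambda>x. c *\<^sub>R F x"] by simp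
qed

lemma mat_poly_diff: "mat_poly F \<Longrightarrow> mat_poly G \<Longrightarrow> mat_poly (\<lambda>x. F x - G x)"
  using mat_poly_add[of F "\<lambda>x. (-1) *\<^sub>R G x"] mat_poly_scaleR[of G "-1"] by simp

lemma mat_poly_xpow: "mat_poly F \<Longrightarrow> mat_poly (\<lambda>x. (x ^ k) *\<^sub>R F x)"
proof -
  assume "mat_poly F"
  obtain n C where F: "\<forall>x. F x = (\<Sum>i\<le>n. (x ^ i) *\<^sub>R C i)"
    using mat_poly_rep[OF \<open>mat_poly F\<close>] by blast
  have "\<forall>x. (x ^ k) *\<^sub>R F x = (\<Sum>i\<le>n. (x ^ (i + k)) *\<^sub>R C i)"
    using F by (simp add: scaleR_sum_right power_add mult.commute)
  then show ?thesis using mat_poly_gen[where S="{..n}" and e="\<lambda>i. i + k" and C=C and F="\<lambda>x. (x ^ k) *\<^sub>R F x"] by simp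
qed

lemma mat_poly_mult: "mat_poly F \<Longrightarrow> mat_poly G \<Longrightarrow> mat_poly (\<lambda>x. (F x::complex^'n^'n) ** G x)"
proof -
  assume "mat_poly F" "mat_poly G"
  obtain n C where F: "\<forall>x. F x = (\<Sum>i\<le>n. (x ^ i) *\<^sub>R C i)"
    using mat_poly_rep[OF \<open>mat_poly F\<close>] by blast
  obtain m D where G: "\<forall>x. G x = (\<Sum>i\<le>m. (x ^ i) *\<^sub>R D i)"
    using mat_poly_rep[OF \<open>mat_poly G\<close>] by blast
  have "F x ** G x = (\<Sum>s\<in>{..n}\<times>{..m}. (x ^ (fst s + snd s)) *\<^sub>R (C (fst s) ** D (snd s)))" for x
  proof -
    have "F x ** G x = (\<Sum>i\<le>n. \<Sum>j\<le>m. (x ^ (i + j)) *\<^sub>R (C i ** D j))"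
      unfolding F[rule_format] G[rule_format] mm_sum_left
      by (simp add: mm_sum_right mm_scaleR_left mm_scaleR_right power_add mult.commute)
    also have "\<dots> = (\<Sum>s\<in>{..n}\<times>{..m}. (x ^ (fst s + snd s)) *\<^sub>R (C (fst s) ** D (snd s)))"
      by (simp add: sum.cartesian_product case_prod_beta)
    finally show ?thesis .
  qed
  then show ?thesis using mat_poly_gen[where S="{..n}\<times>{..m}" and e="\<lambda>s. fst s + snd s"
     and C="\<lambda>s. C (fst s) ** D (snd s)" and F="\<lambda>x. F x ** G x"] by simp
qed

lemma mat_poly_sum: "finite S \<Longrightarrow> (\<And>i. i \<in> S \<Longrightarrow> mat_poly (F i)) \<Longrightarrow> mat_poly (\<lambda>x. \<Sum>i\<in>S. F i x)"
  by (induction S rule: finite_induct) (auto intro: mat_poly_add simp: mat_poly_const[of 0, simplified])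

lemma mat_poly_dop: "(\<And>i. i \<le> k \<Longrightarrow> mat_poly (G i)) \<Longrightarrow> mat_poly F \<Longrightarrow> mat_poly (dop_apply k G F)"
  unfolding dop_apply_def[abs_def]
  by (intro mat_poly_sum mat_poly_mult mat_poly_vderiv) auto



lemma vd_cong:
  assumes "open S" "x \<in> S" "\<forall>y\<in>S. f y = g y"
  shows "vector_derivative f (at x) = vector_derivative g (at x)"
proof -
  have "(f has_vector_derivative d) (at x) \<longleftrightarrow> (g has_vector_derivative d) (at x)" for d
    using has_vector_derivative_transform_within_open[OF _ assms(1,2), of f d g]
      has_vector_derivative_transform_within_open[OF _ assms(1,2), of g d f] assms(3) by auto
  then show ?thesis unfolding vector_derivative_def by simp
qed

lemma vderiv_local:
  assumes "open S" "\<forall>y\<in>S. f y = g y"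
  shows "x \<in> S \<Longrightarrow> vderiv_iter m f x = vderiv_iter m g x"
proof (induction m arbitrary: x)
  case 0
  then show ?case using assms by (simp add: vderiv_iter_def)
next
  case (Suc m)
  show ?case unfolding vderiv_Suc by (rule vd_cong[OF assms(1) Suc.prems]) (use Suc.IH in blast)
qed

lemma dop_local:
  assumes "open S" "\<forall>y\<in>S. f y = g y" "x \<in> S"
  shows "dop_apply k G f x = dop_apply k G g x"
  unfolding dop_apply_def using vderiv_local[OF assms(1,2,3)] by simp

lemma monic_poly: "monic_mat_poly F n \<Longrightarrow> mat_poly F"
  unfolding monic_mat_poly_def mat_poly_def mat_poly_le_def by blast

lemma expand:
  assumes P: "\<forall>m. monic_mat_poly (P m) m"
  shows "mat_poly_le (Q::real \<Rightarrow> complex^'n^'n) d \<Longrightarrow> \<exists>A. \<forall>x. Q x = (\<Sum>m\<le>d. A m ** P m x)"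
proof (induction d arbitrary: Q)
  case 0
  obtain C where C: "\<forall>x. Q x = (\<Sum>i\<le>0. (x ^ i) *\<^sub>R C i)"
    using 0 unfolding mat_poly_le_def by blast
  obtain D where D: "D 0 = mat 1" "\<forall>x. P 0 x = (\<Sum>i\<le>0. (x ^ i) *\<^sub>R D i)"
    using P unfolding monic_mat_poly_def by blast
  have "\<forall>x. Q x = (\<Sum>m\<le>0. C 0 ** P m x)" using C D by simp
  then show ?case by (rule exI[where x="\<lambda>m. C 0"])
next
  case (Suc d)
  obtain C where C: "\<forall>x. Q x = (\<Sum>i\<le>Suc d. (x ^ i) *\<^sub>R C i)"
    using Suc.prems unfolding mat_poly_le_def by blast
  obtain D where D: "D (Suc d) = mat 1" "\<forall>x. P (Suc d) x = (\<Sum>i\<le>Suc d. (x ^ i) *\<^sub>R D i)"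
    using P unfolding monic_mat_poly_def by blast
  define Q' where "Q' x = Q x - C (Suc d) ** P (Suc d) x" for x
  have "Q' x = (\<Sum>i\<le>d. (x ^ i) *\<^sub>R (C i - C (Suc d) ** D i))" for x
  proof -
    have "Q' x = (\<Sum>i\<le>Suc d. (x ^ i) *\<^sub>R (C i - C (Suc d) ** D i))"
      unfolding Q'_def C[rule_format] D(2)[rule_format] mm_sum_right mm_scaleR_right
      by (simp only: scaleR_diff_right sum_subtractf)
    also have "\<dots> = (\<Sum>i\<le>d. (x ^ i) *\<^sub>R (C i - C (Suc d) ** D i))"
      using D(1) by simp
    finally show ?thesis .
  qed
  then have "mat_poly_le Q' d" unfolding mat_poly_le_def by (intro exI[where x="\<lambda>i. C i - C (Suc d) ** D i"]) blast
  then obtain A where A: "\<forall>x. Q' x = (\<Sum>m\<le>d. A m ** P m x)" using Suc.IH by blast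
  define A' where "A' = A(Suc d := C (Suc d))"
  have "Q x = (\<Sum>m\<le>Suc d. A' m ** P m x)" for x
  proof -
    have "(\<Sum>m\<le>d. A' m ** P m x) = (\<Sum>m\<le>d. A m ** P m x)"
      unfolding A'_def by (rule sum.cong) auto
    then show ?thesis using A[rule_format, of x] unfolding Q'_def by (simp add: A'_def) (metis diff_add_cancel)
  qed
  then show ?case by blast
qed

lemma bl_ml: "bounded_linear (\<lambda>X. (A::complex^'n^'n) ** (X::complex^'n^'n))"
  using bl_mm[of A "mat 1"] by simp

lemma poly_integrable:
  assumes mom: "\<forall>k. set_integrable lborel I (\<lambda>x. (x ^ k) *\<^sub>R V x)"
    and "mat_poly P" "mat_poly Q"
  shows "set_integrable lborel I (\<lambda>x. P x ** (V x::complex^'n^'n) ** mat_adj (Q x))"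
proof -
  obtain n C where F: "\<forall>x. P x = (\<Sum>i\<le>n. (x ^ i) *\<^sub>R C i)"
    using mat_poly_rep[OF \<open>mat_poly P\<close>] by blast
  obtain m D where G: "\<forall>x. Q x = (\<Sum>i\<le>m. (x ^ i) *\<^sub>R D i)"
    using mat_poly_rep[OF \<open>mat_poly Q\<close>] by blast
  have eq: "indicator I x *\<^sub>R (P x ** V x ** mat_adj (Q x)) =
     (\<Sum>i\<le>n. \<Sum>j\<le>m. C i ** (indicator I x *\<^sub>R ((x ^ (i + j)) *\<^sub>R V x)) ** mat_adj (D j))" for x
    unfolding F[rule_format] G[rule_format] adj_sum adj_scaleR mm_sum_left
    by (simp add: mm_sum_right mm_sum_left mm_scaleR_right mm_scaleR_left power_add scaleR_sum_right
        mult.commute)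
  have "integrable lborel (\<lambda>x. \<Sum>i\<le>n. \<Sum>j\<le>m. C i ** (indicator I x *\<^sub>R ((x ^ (i + j)) *\<^sub>R V x)) ** mat_adj (D j))"
  proof (rule Bochner_Integration.integrable_sum[where f="\<lambda>i x. \<Sum>j\<le>m. C i ** (indicator I x *\<^sub>R ((x ^ (i + j)) *\<^sub>R V x)) ** mat_adj (D j)"],
         rule Bochner_Integration.integrable_sum[where f="\<lambda>j x. C i ** (indicator I x *\<^sub>R ((x ^ (i + j)) *\<^sub>R V x)) ** mat_adj (D j)" for i])
    fix i j
    have "integrable lborel (\<lambda>x. indicator I x *\<^sub>R ((x ^ (i + j)) *\<^sub>R V x))"
      using mom unfolding set_integrable_def by blast
    from integrable_bounded_linear[OF bl_mm[of "C i" "mat_adj (D j)"] this]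
    show "integrable lborel (\<lambda>x. C i ** (indicator I x *\<^sub>R ((x ^ (i + j)) *\<^sub>R V x)) ** mat_adj (D j))" .
  qed
  then show ?thesis unfolding set_integrable_def eq .
qed

lemma mip_sum_left:
  assumes "finite S" "\<And>m. m \<in> S \<Longrightarrow> set_integrable lborel I (\<lambda>x. P m x ** (V x::complex^'n^'n) ** mat_adj (Q x))"
  shows "mip V I (\<lambda>x. \<Sum>m\<in>S. A m ** P m x) Q = (\<Sum>m\<in>S. A m ** mip V I (P m) Q)"
proof -
  have eq: "indicator I x *\<^sub>R ((\<Sum>m\<in>S. A m ** P m x) ** V x ** mat_adj (Q x)) =
      (\<Sum>m\<in>S. A m ** (indicator I x *\<^sub>R (P m x ** V x ** mat_adj (Q x))))" for x
    by (simp add: mm_sum_left scaleR_sum_right mm_scaleR_right matrix_mul_assoc)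
  have i: "integrable lborel (\<lambda>x. indicator I x *\<^sub>R (P m x ** V x ** mat_adj (Q x)))" if "m \<in> S" for m
    using assms(2)[OF that] unfolding set_integrable_def .
  have "(LINT x|lborel. (\<Sum>m\<in>S. A m ** (indicator I x *\<^sub>R (P m x ** V x ** mat_adj (Q x))))) =
      (\<Sum>m\<in>S. (LINT x|lborel. A m ** (indicator I x *\<^sub>R (P m x ** V x ** mat_adj (Q x)))))"
    by (rule Bochner_Integration.integral_sum[where f="\<lambda>m x. A m ** (indicator I x *\<^sub>R (P m x ** V x ** mat_adj (Q x)))"])
       (rule integrable_bounded_linear[OF bl_ml i])
  also have "\<dots> = (\<Sum>m\<in>S. A m ** (LINT x|lborel. (indicator I x *\<^sub>R (P m x ** V x ** mat_adj (Q x)))))"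
    by (rule sum.cong[OF refl]) (rule integral_bounded_linear[OF bl_ml i])
  finally show ?thesis unfolding mip_def set_lebesgue_integral_def eq .
qed

lemma mip_diff_right:
  assumes "set_integrable lborel I (\<lambda>x. P x ** (V x::complex^'n^'n) ** mat_adj (Q1 x))"
    "set_integrable lborel I (\<lambda>x. P x ** (V x::complex^'n^'n) ** mat_adj (Q2 x))"
  shows "mip V I P (\<lambda>x. Q1 x - Q2 x) = mip V I P Q1 - mip V I P Q2"
  unfolding mip_def adj_diff mm_diff_right using set_integral_diff(2)[OF assms] by simp



definition qf :: "complex^'n^'n \<Rightarrow> complex^'n \<Rightarrow> complex" where
  "qf A v = (\<Sum>i\<in>UNIV. \<Sum>j\<in>UNIV. cnj (v $ i) * A $ i $ j * v $ j)"

lemma bl_qf: "bounded_linear (\<lambda>A. Re (qf A v))"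
proof -
  have c: "(r *\<^sub>R A) $ i $ j = complex_of_real r * A $ i $ j" for r and A :: "complex^'n^'n" and i j
    by (simp only: vector_scaleR_component) (simp add: scaleR_conv_of_real)
  have "qf (A + B) v = qf A v + qf B v" for A B
    by (simp add: qf_def sum.distrib algebra_simps)
  moreover have "qf (r *\<^sub>R A) v = complex_of_real r * qf A v" for r A
    unfolding qf_def c by (simp add: sum_distrib_left algebra_simps)
  ultimately have "linear (\<lambda>A. Re (qf A v))"
    by (intro linearI) simp_all
  then show ?thesis using linear_conv_bounded_linear by blast
qed

lemma sum4_perm: "(\<Sum>a\<in>A. \<Sum>b\<in>B. \<Sum>j\<in>J. \<Sum>i\<in>I. F a b j i) = (\<Sum>i\<in>I. \<Sum>j\<in>J. \<Sum>a\<in>A. \<Sum>b\<in>B. F a b j i)"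
proof -
  have 1: "(\<Sum>a\<in>A. \<Sum>b\<in>B. \<Sum>j\<in>J. \<Sum>i\<in>I. F a b j i) = (\<Sum>a\<in>A. \<Sum>b\<in>B. \<Sum>i\<in>I. \<Sum>j\<in>J. F a b j i)"
    by (rule sum.cong[OF refl], rule sum.cong[OF refl], rule sum.swap)
  have 2: "\<dots> = (\<Sum>a\<in>A. \<Sum>i\<in>I. \<Sum>b\<in>B. \<Sum>j\<in>J. F a b j i)"
    by (rule sum.cong[OF refl], rule sum.swap)
  have 3: "\<dots> = (\<Sum>a\<in>A. \<Sum>i\<in>I. \<Sum>j\<in>J. \<Sum>b\<in>B. F a b j i)"
    by (rule sum.cong[OF refl], rule sum.cong[OF refl], rule sum.swap)
  have 4: "\<dots> = (\<Sum>i\<in>I. \<Sum>a\<in>A. \<Sum>j\<in>J. \<Sum>b\<in>B. F a b j i)"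
    by (rule sum.swap)
  have 5: "\<dots> = (\<Sum>i\<in>I. \<Sum>j\<in>J. \<Sum>a\<in>A. \<Sum>b\<in>B. F a b j i)"
    by (rule sum.cong[OF refl], rule sum.swap)
  show ?thesis using 1 2 3 4 5 by simp
qed

lemma qf_sandwich: "qf (Q ** V ** mat_adj Q) v = qf V (mat_adj Q *v v)"
proof -
  have "qf (Q ** V ** mat_adj Q) v =
     (\<Sum>a\<in>UNIV. \<Sum>b\<in>UNIV. \<Sum>j\<in>UNIV. \<Sum>i\<in>UNIV. cnj (v $ a) * Q $ a $ i * V $ i $ j * cnj (Q $ b $ j) * v $ b)"
    by (simp add: qf_def matrix_matrix_mult_def mat_adj_def sum_distrib_left sum_distrib_right mult.assoc)
  also have "\<dots> = (\<Sum>i\<in>UNIV. \<Sum>j\<in>UNIV. \<Sum>a\<in>UNIV. \<Sum>b\<in>UNIV. cnj (v $ a) * Q $ a $ i * V $ i $ j * cnj (Q $ b $ j) * v $ b)"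
    by (rule sum4_perm)
  also have "\<dots> = qf V (mat_adj Q *v v)"
    apply (simp add: qf_def matrix_vector_mult_def mat_adj_def sum_distrib_left sum_distrib_right)
    apply (rule sum.cong[OF refl], rule sum.cong[OF refl], subst sum.swap)
    apply (rule sum.cong[OF refl], rule sum.cong[OF refl])
    apply (simp add: mult_ac)
    done
  finally show ?thesis .
qed

lemma poly_ae_zero_real:
  assumes "AE x in lborel. (\<Sum>k\<le>n. c k * x ^ k) = (0::real)"
  shows "\<forall>k\<le>n. c k = 0"
proof (rule ccontr)
  assume "\<not> (\<forall>k\<le>n. c k = 0)"
  then have "finite {x. (\<Sum>k\<le>n. c k * x ^ k) = 0}" using polyfun_finite_roots by blast
  then have "AE x in lborel. x \<notin> {x. (\<Sum>k\<le>n. c k * x ^ k) = 0}"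
    by (intro AE_not_in finite_imp_null_set_lborel)
  from eventually_conj[OF assms this] have "AE x in (lborel::real measure). False" by (rule eventually_mono) simp
  then have "ae_filter (lborel::real measure) = bot" using eventually_False by blast
  then show False using ae_filter_eq_bot_iff[of "lborel::real measure"] by simp
qed

lemma mat_poly_ae_zero:
  assumes "mat_poly (Q::real \<Rightarrow> complex^'n^'n)" "AE x in lborel. Q x = 0"
  shows "Q x = 0"
proof -
  obtain n C where F: "\<forall>x. Q x = (\<Sum>i\<le>n. (x ^ i) *\<^sub>R C i)"
    using mat_poly_rep[OF assms(1)] by blast
  have ent: "Q x $ b $ i = (\<Sum>k\<le>n. (x ^ k) *\<^sub>R (C k $ b $ i))" for x b i
    unfolding F[rule_format] by simp
  have eR: "(\<Sum>k\<le>n. Re (C k $ b $ i) * x ^ k) = Re (Q x $ b $ i)" for x b i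
    unfolding ent by (simp add: Re_sum mult.commute)
  have eI: "(\<Sum>k\<le>n. Im (C k $ b $ i) * x ^ k) = Im (Q x $ b $ i)" for x b i
    unfolding ent by (simp add: Im_sum mult.commute)
  have "C k $ b $ i = 0" if "k \<le> n" for k b i
  proof -
    have "AE x in lborel. (\<Sum>k\<le>n. Re (C k $ b $ i) * x ^ k) = 0"
      using assms(2) by eventually_elim (simp only: eR, simp)
    from poly_ae_zero_real[OF this] have 1: "Re (C k $ b $ i) = 0" using that by blast
    have "AE x in lborel. (\<Sum>k\<le>n. Im (C k $ b $ i) * x ^ k) = 0"
      using assms(2) by eventually_elim (simp only: eI, simp)
    from poly_ae_zero_real[OF this] have 2: "Im (C k $ b $ i) = 0" using that by blast
    show ?thesis using 1 2 by (simp add: complex_eq_iff)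
  qed
  then show ?thesis unfolding vec_eq_iff ent by simp
qed

lemma adj_axis_zero: "(\<forall>b. mat_adj A *v axis b 1 = 0) \<Longrightarrow> (A::complex^'n^'n) = 0"
proof -
  assume h: "\<forall>b. mat_adj A *v axis b 1 = 0"
  have "(mat_adj A *v axis b 1) $ i = cnj (A $ b $ i)" for b i
    by (simp add: matrix_vector_mult_def mat_adj_def axis_def if_distrib cong: if_cong)
  then show ?thesis using h by (simp add: vec_eq_iff)
qed

lemma mip_zero_imp:
  assumes pd: "AE x in lborel. pos_def_mat (V x)"
    and mom: "\<forall>k. set_integrable lborel UNIV (\<lambda>x. (x ^ k) *\<^sub>R V x)"
    and Q: "mat_poly Q" and z: "mip V UNIV Q Q = (0::complex^'n^'n)"
  shows "Q x = 0"
proof -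
  let ?M = "\<lambda>x. Q x ** V x ** mat_adj (Q x)"
  have int: "integrable lborel ?M"
    using poly_integrable[OF mom Q Q] unfolding set_integrable_def by simp
  have intM: "(LINT x|lborel. ?M x) = 0" using z unfolding mip_def set_lebesgue_integral_def by simp
  have ae: "AE x in lborel. mat_adj (Q x) *v v = 0" for v
  proof -
    let ?f = "\<lambda>x. Re (qf (?M x) v)"
    have fi: "integrable lborel ?f" by (rule integrable_bounded_linear[OF bl_qf int])
    have "integral\<^sup>L lborel ?f = Re (qf 0 v)"
      using integral_bounded_linear[OF bl_qf int] intM by simp
    then have f0: "integral\<^sup>L lborel ?f = 0" by (simp add: qf_def)
    have pos: "0 < ?f x" if "pos_def_mat (V x)" "mat_adj (Q x) *v v \<noteq> 0" for x
    proof -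
      have "0 < Re (\<Sum>i\<in>UNIV. \<Sum>j\<in>UNIV. cnj ((mat_adj (Q x) *v v) $ i) * V x $ i $ j * (mat_adj (Q x) *v v) $ j)"
        using that(1)[unfolded pos_def_mat_def, THEN conjunct2, rule_format, OF that(2)] by (rule conjunct2)
      then have "0 < Re (qf (V x) (mat_adj (Q x) *v v))" unfolding qf_def .
      then show ?thesis by (simp only: qf_sandwich)
    qed
    have nn: "AE x in lborel. 0 \<le> ?f x"
      using pd
    proof eventually_elim
      case (elim x)
      show ?case
      proof (cases "mat_adj (Q x) *v v = 0")
        case True
        have "qf (V x) (mat_adj (Q x) *v v) = 0" unfolding True by (simp add: qf_def)
        then show ?thesis by (simp only: qf_sandwich) simp
      next
        case False then show ?thesis using pos[OF elim] by simp
      qed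
    qed
    have "AE x in lborel. ?f x = 0" using integral_nonneg_eq_0_iff_AE[OF fi nn] f0 by simp
    then show ?thesis using pd
    proof eventually_elim
      case (elim x)
      show ?case
      proof (rule ccontr)
        assume "mat_adj (Q x) *v v \<noteq> 0"
        from pos[OF elim(2) this] elim(1) show False by simp
      qed
    qed
  qed
  have "AE x in lborel. \<forall>b\<in>UNIV. mat_adj (Q x) *v axis b 1 = 0"
    using ae by (subst eventually_ball_finite_distrib) auto
  then have "AE x in lborel. Q x = 0"
    by eventually_elim (rule adj_axis_zero, simp)
  then show ?thesis by (rule mat_poly_ae_zero[OF Q])
qed



lemma mip_UNIV: "mip V UNIV F G = (LINT x|lborel. F x ** V x ** mat_adj (G x))"
  by (simp add: mip_def set_lebesgue_integral_def)

lemma monic_rep: "monic_mat_poly F n \<Longrightarrow> \<exists>C. C n = mat 1 \<and> (\<forall>x. F x = (\<Sum>i\<le>n. (x ^ i) *\<^sub>R C i))"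
  unfolding monic_mat_poly_def by blast

lemma monic_unique:
  assumes pd: "AE x in lborel. pos_def_mat (V x)"
    and mom: "\<forall>k. set_integrable lborel UNIV (\<lambda>x. (x ^ k) *\<^sub>R V x)"
    and P: "monic_OP V UNIV (P::nat \<Rightarrow> real \<Rightarrow> complex^'n^'n)" and S: "monic_OP V UNIV S"
  shows "P n x = S n x"
proof -
  have Pm: "\<forall>m. monic_mat_poly (P m) m" and Po: "\<And>a b. a \<noteq> b \<Longrightarrow> mip V UNIV (P a) (P b) = 0"
    using P unfolding monic_OP_def by auto
  have Sm: "\<forall>m. monic_mat_poly (S m) m" and So: "\<And>a b. a \<noteq> b \<Longrightarrow> mip V UNIV (S a) (S b) = 0"
    using S unfolding monic_OP_def by auto
  obtain C where C: "C n = mat 1" "\<forall>x. P n x = (\<Sum>i\<le>n. (x ^ i) *\<^sub>R C i)" using monic_rep[OF Pm[rule_format, of n]] by blast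
  have PP: "mat_poly (P m)" for m using monic_poly Pm by blast
  have SP: "mat_poly (S m)" for m using monic_poly Sm by blast
  obtain D where D: "D n = mat 1" "\<forall>x. S n x = (\<Sum>i\<le>n. (x ^ i) *\<^sub>R D i)" using monic_rep[OF Sm[rule_format, of n]] by blast
  show ?thesis
  proof (cases n)
    case 0
    then show ?thesis using C D by simp
  next
    case (Suc d)
    define Q where "Q x = P n x - S n x" for x
    have "Q x = (\<Sum>i\<le>d. (x ^ i) *\<^sub>R (C i - D i))" for x
    proof -
      have "Q x = (\<Sum>i\<le>n. (x ^ i) *\<^sub>R (C i - D i))"
        unfolding Q_def C(2)[rule_format] D(2)[rule_format] by (simp add: scaleR_diff_right sum_subtractf)
      then show ?thesis using C(1) D(1) Suc by simp
    qed
    then have Qd: "mat_poly_le Q d" unfolding mat_poly_le_def by (intro exI[where x="\<lambda>i. C i - D i"]) blast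
    then have Qp: "mat_poly Q" unfolding mat_poly_def by blast
    obtain A where A: "\<forall>x. Q x = (\<Sum>m\<le>d. A m ** P m x)" using expand[OF Pm Qd] by blast
    obtain B where B: "\<forall>x. Q x = (\<Sum>m\<le>d. B m ** S m x)" using expand[OF Sm Qd] by blast
    have QA: "Q = (\<lambda>x. \<Sum>m\<le>d. A m ** P m x)" using A by auto
    have QB: "Q = (\<lambda>x. \<Sum>m\<le>d. B m ** S m x)" using B by auto
    have "mip V UNIV Q (P n) = (\<Sum>m\<le>d. A m ** mip V UNIV (P m) (P n))"
      unfolding QA by (rule mip_sum_left) (simp_all add: poly_integrable[OF mom] PP)
    also have "\<dots> = 0" using Po Suc by (intro sum.neutral) auto
    finally have 1: "mip V UNIV Q (P n) = 0" .
    have "mip V UNIV Q (S n) = (\<Sum>m\<le>d. B m ** mip V UNIV (S m) (S n))"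
      unfolding QB by (rule mip_sum_left) (simp_all add: poly_integrable[OF mom] SP)
    also have "\<dots> = 0" using So Suc by (intro sum.neutral) auto
    finally have 2: "mip V UNIV Q (S n) = 0" .
    have "mip V UNIV Q Q = mip V UNIV Q (\<lambda>x. P n x - S n x)" unfolding Q_def[abs_def] ..
    also have "\<dots> = mip V UNIV Q (P n) - mip V UNIV Q (S n)"
      by (rule mip_diff_right) (simp_all add: poly_integrable[OF mom] SP PP Qp)
    finally have "mip V UNIV Q Q = 0" using 1 2 by simp
    then have "Q x = 0" by (rule mip_zero_imp[OF pd mom Qp])
    then show ?thesis unfolding Q_def by simp
  qed
qed

lemma integral_reflect:
  fixes f :: "real \<Rightarrow> complex^'n^'n"
  shows "(LINT x|lborel. f (- x)) = (LINT x|lborel. f x)"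
  using lborel_integral_real_affine[of "-1" f 0] by simp

lemma parity:
  assumes pd: "AE x in lborel. pos_def_mat (V x)"
    and mom: "\<forall>k. set_integrable lborel UNIV (\<lambda>x. (x ^ k) *\<^sub>R V x)"
    and ev: "\<forall>x. V x = V (- x)"
    and P: "monic_OP V UNIV (P::nat \<Rightarrow> real \<Rightarrow> complex^'n^'n)"
  shows "P n (- x) = ((-1) ^ n) *\<^sub>R P n x"
proof -
  define S where "S n x = ((-1) ^ n) *\<^sub>R P n (- x)" for n x
  have Pm: "\<forall>m. monic_mat_poly (P m) m" and Po: "\<And>a b. a \<noteq> b \<Longrightarrow> mip V UNIV (P a) (P b) = 0"
    using P unfolding monic_OP_def by auto
  have "monic_mat_poly (S m) m" for m
  proof -
    obtain C where C: "C m = mat 1" "\<forall>x. P m x = (\<Sum>i\<le>m. (x ^ i) *\<^sub>R C i)" using monic_rep[OF Pm[rule_format, of m]] by blast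
    have "S m x = (\<Sum>i\<le>m. (x ^ i) *\<^sub>R (((-1) ^ m * (-1) ^ i) *\<^sub>R C i))" for x
      unfolding S_def C(2)[rule_format] scaleR_sum_right
    proof (rule sum.cong[OF refl])
      fix i
      have "(- x) ^ i = (-1) ^ i * x ^ i" by (rule power_minus)
      then show "(-1) ^ m *\<^sub>R (- x) ^ i *\<^sub>R C i = x ^ i *\<^sub>R ((-1) ^ m * (-1) ^ i) *\<^sub>R C i"
        by (simp only: scaleR_scaleR) (simp only: mult.assoc mult.commute mult.left_commute)
    qed
    moreover have "(-1::real) ^ m * (-1) ^ m = 1" by (simp flip: power_mult_distrib)
    then have "((-1) ^ m * (-1) ^ m) *\<^sub>R C m = mat 1" using C(1) by simp
    ultimately show ?thesis unfolding monic_mat_poly_def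
      by (intro exI[where x="\<lambda>i. ((-1) ^ m * (-1) ^ i) *\<^sub>R C i"]) blast
  qed
  moreover have "mip V UNIV (S a) (S b) = 0" if "a \<noteq> b" for a b
  proof -
    have eq1: "mip V UNIV (S a) (S b) = (LINT x|lborel. ((-1) ^ a * (-1) ^ b) *\<^sub>R (P a (- x) ** V x ** mat_adj (P b (- x))))"
      unfolding mip_UNIV S_def by (simp add: mm_scaleR_left mm_scaleR_right adj_scaleR)
    have eq2: "(\<lambda>x. ((-1) ^ a * (-1) ^ b) *\<^sub>R (P a (- x) ** V x ** mat_adj (P b (- x)))) =
        (\<lambda>x. ((-1) ^ a * (-1) ^ b) *\<^sub>R (P a (- x) ** V (- x) ** mat_adj (P b (- x))))"
      by (rule ext) (subst ev[rule_format], rule refl)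
    have eq3: "(LINT x|lborel. ((-1) ^ a * (-1) ^ b) *\<^sub>R (P a (- x) ** V (- x) ** mat_adj (P b (- x)))) =
       ((-1) ^ a * (-1) ^ b) *\<^sub>R (LINT x|lborel. (P a (- x) ** V (- x) ** mat_adj (P b (- x))))"
      by simp
    have eq4: "(LINT x|lborel. (P a (- x) ** V (- x) ** mat_adj (P b (- x)))) = mip V UNIV (P a) (P b)"
      unfolding mip_UNIV by (rule integral_reflect[where f="\<lambda>x. P a x ** V x ** mat_adj (P b x)"])
    show ?thesis using eq1 eq2 eq3 eq4 Po[OF that] by simp
  qed
  ultimately have "monic_OP V UNIV S" unfolding monic_OP_def by blast
  from monic_unique[OF pd mom P this] have "P n (- x) = S n (- x)" .
  then show ?thesis unfolding S_def by simp
qed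



definition sq :: "real \<Rightarrow> real" where "sq x = x * \<bar>x\<bar>"

lemma sq_less: "x < y \<Longrightarrow> sq x < sq y"
  unfolding sq_def
  by (smt (verit, del_insts) mult_less_cancel_left ordered_semiring_strict_class.mult_strict_right_mono)

lemma sq_mono: "strict_mono sq" using sq_less by (rule strict_monoI)

definition sqi :: "real \<Rightarrow> real" where "sqi y = sgn y * sqrt \<bar>y\<bar>"

lemma sq_sqi: "sq (sqi y) = y"
  unfolding sq_def sqi_def by (cases "y \<ge> 0") (auto simp: abs_mult sgn_if)

lemma sq_deriv: "(sq has_real_derivative 2 * \<bar>x\<bar>) (at x)"
proof -
  consider "x > 0" | "x < 0" | "x = 0" by linarith
  then show ?thesis
  proof cases
    case 1
    have "((\<lambda>y. y * y) has_real_derivative 2 * \<bar>x\<bar>) (at x)"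
      using 1 by (auto intro!: derivative_eq_intros)
    then show ?thesis
      by (rule has_field_derivative_transform_within_open[where S="{0<..}"]) (use 1 in \<open>auto simp: sq_def\<close>)
  next
    case 2
    have "((\<lambda>y. - (y * y)) has_real_derivative 2 * \<bar>x\<bar>) (at x)"
      using 2 by (auto intro!: derivative_eq_intros)
    then show ?thesis
      by (rule has_field_derivative_transform_within_open[where S="{..<0}"]) (use 2 in \<open>auto simp: sq_def\<close>)
  next
    case 3
    have "((\<lambda>y. \<bar>y\<bar>) \<longlongrightarrow> \<bar>0\<bar>) (at (0::real))"
      by (intro tendsto_rabs tendsto_ident_at)
    then have "((\<lambda>y. \<bar>y\<bar>) \<longlongrightarrow> 0) (at (0::real))" by simp
    moreover have "\<forall>\<^sub>F y in at 0. (sq y - sq 0) / (y - 0) = \<bar>y\<bar>"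
      by (simp add: eventually_at_filter sq_def)
    ultimately have "((\<lambda>y. (sq y - sq 0) / (y - 0)) \<longlongrightarrow> 0) (at 0)"
      using tendsto_cong by fastforce
    then show ?thesis unfolding has_field_derivative_iff 3 by simp
  qed
qed

lemma sq_meas[measurable]: "sq \<in> borel_measurable borel"
  unfolding sq_def[abs_def] by measurable

definition Dsq :: "real measure" where "Dsq = density lborel (\<lambda>x. ennreal (2 * \<bar>x\<bar>))"

lemma sets_Dsq[simp]: "sets Dsq = sets borel" by (simp add: Dsq_def)
lemma space_Dsq[simp]: "space Dsq = UNIV" by (simp add: Dsq_def)

lemma sq_meas_D: "sq \<in> measurable Dsq lborel"
  using sq_meas by (simp add: measurable_def)

lemma emeasure_Dsq_box:
  assumes "a \<le> b"
  shows "emeasure Dsq {a<..<b} = ennreal (sq b - sq a)"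
proof -
  have "emeasure Dsq {a<..<b} = (\<integral>\<^sup>+ x. ennreal (2 * \<bar>x\<bar>) * indicator {a<..<b} x \<partial>lborel)"
    unfolding Dsq_def by (rule emeasure_density) auto
  also have "\<dots> = (\<integral>\<^sup>+ x. ennreal (2 * \<bar>x\<bar>) * indicator {a..b} x \<partial>lborel)"
  proof (rule nn_integral_cong_AE)
    show "AE x in lborel. ennreal (2 * \<bar>x\<bar>) * indicator {a<..<b} x = ennreal (2 * \<bar>x\<bar>) * indicator {a..b} x"
      using AE_lborel_singleton[of a] AE_lborel_singleton[of b]
      by eventually_elim (auto split: split_indicator)
  qed
  also have "\<dots> = ennreal (sq b - sq a)"
    using nn_integral_FTC_Icc[of "\<lambda>x. 2 * \<bar>x\<bar>" a b sq] sq_deriv assms by simp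
  finally show ?thesis .
qed

lemma sq_preimage: "sq -` {a<..<b} = {sqi a<..<sqi b}"
proof (rule set_eqI)
  fix x
  have 1: "a < sq x \<longleftrightarrow> sqi a < x" using strict_mono_less[OF sq_mono, of "sqi a" x] unfolding sq_sqi .
  have 2: "sq x < b \<longleftrightarrow> x < sqi b" using strict_mono_less[OF sq_mono, of x "sqi b"] unfolding sq_sqi .
  show "x \<in> sq -` {a<..<b} \<longleftrightarrow> x \<in> {sqi a<..<sqi b}" using 1 2 by simp
qed

lemma distr_Dsq: "distr Dsq lborel sq = lborel"
proof (rule lborel_eqI[symmetric])
  fix l u :: real
  assume "\<And>b. b \<in> Basis \<Longrightarrow> l \<bullet> b \<le> u \<bullet> b"
  then have lu: "l \<le> u" by simp
  have "sqi l \<le> sqi u"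
    using lu strict_mono_less_eq[OF sq_mono, of "sqi l" "sqi u"] unfolding sq_sqi by simp
  have "emeasure (distr Dsq lborel sq) (box l u) = emeasure Dsq (sq -` {l<..<u} \<inter> space Dsq)"
    by (subst emeasure_distr[OF sq_meas_D]) (auto simp: box_real)
  also have "\<dots> = emeasure Dsq {sqi l<..<sqi u}" unfolding sq_preimage space_Dsq by simp
  also have "\<dots> = ennreal (u - l)" using emeasure_Dsq_box[OF \<open>sqi l \<le> sqi u\<close>] by (simp add: sq_sqi)
  finally show "emeasure (distr Dsq lborel sq) (box l u) = (\<Prod>b\<in>Basis. (u - l) \<bullet> b)" by simp
qed simp




lemma subst_sq:
  fixes f :: "real \<Rightarrow> complex^'n^'n"
  assumes "set_integrable lborel {0<..} f"
  shows "(LINT y:{0<..}|lborel. f y) = (LINT x:{0<..}|lborel. (2 * x) *\<^sub>R f (x ^ 2))"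
proof -
  let ?p = "\<lambda>y. indicator {0<..} y *\<^sub>R f y"
  have pm: "?p \<in> borel_measurable lborel" using assms unfolding set_integrable_def
    by (rule borel_measurable_integrable)
  have sqm: "sq \<in> measurable lborel lborel" using sq_meas by (simp add: measurable_def)
  have "(LINT y:{0<..}|lborel. f y) = integral\<^sup>L lborel ?p" by (simp add: set_lebesgue_integral_def)
  also have "\<dots> = integral\<^sup>L (distr Dsq lborel sq) ?p" by (simp add: distr_Dsq)
  also have "\<dots> = integral\<^sup>L Dsq (\<lambda>x. ?p (sq x))" by (rule integral_distr[OF sq_meas_D pm])
  also have "\<dots> = integral\<^sup>L lborel (\<lambda>x. (2 * \<bar>x\<bar>) *\<^sub>R ?p (sq x))" unfolding Dsq_def
    using measurable_compose[OF sqm pm] by (intro integral_density) (auto simp: measurable_lborel1)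
  also have "\<dots> = integral\<^sup>L lborel (\<lambda>x. indicator {0<..} x *\<^sub>R ((2 * x) *\<^sub>R f (x ^ 2)))"
  proof (rule arg_cong[where f="integral\<^sup>L lborel"], rule ext)
    fix x :: real
    show "(2 * \<bar>x\<bar>) *\<^sub>R ?p (sq x) = indicator {0<..} x *\<^sub>R ((2 * x) *\<^sub>R f (x ^ 2))"
    proof (cases "x > 0")
      case True
      then have "sq x = x ^ 2" "sq x > 0" by (auto simp: sq_def power2_eq_square)
      then show ?thesis using True by simp
    next
      case False
      then have "\<not> sq x > 0" by (auto simp: sq_def mult_le_0_iff)
      then show ?thesis using False by simp
    qed
  qed
  finally show ?thesis by (simp add: set_lebesgue_integral_def)
qed

lemma half_integral:
  fixes h :: "real \<Rightarrow> complex^'n^'n"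
  assumes hi: "integrable lborel h" and ev: "\<And>x. h (- x) = h x"
  shows "(LINT x:{0<..}|lborel. h x) = (1/2) *\<^sub>R (LINT x|lborel. h x)"
proof -
  let ?A = "{0<..}::real set" and ?B = "{..<0}::real set"
  have iA: "integrable lborel (\<lambda>x. indicator ?A x *\<^sub>R h x)" by (rule integrable_mult_indicator) (auto intro: hi)
  have iB: "integrable lborel (\<lambda>x. indicator ?B x *\<^sub>R h x)" by (rule integrable_mult_indicator) (auto intro: hi)
  have "(LINT x|lborel. h x) = (LINT x|lborel. indicator ?A x *\<^sub>R h x + indicator ?B x *\<^sub>R h x)"
  proof (rule integral_cong_AE)
    show "h \<in> borel_measurable lborel" using hi by (rule borel_measurable_integrable)
    show "(\<lambda>x. indicator ?A x *\<^sub>R h x + indicator ?B x *\<^sub>R h x) \<in> borel_measurable lborel"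
      using Bochner_Integration.integrable_add[OF iA iB] by (rule borel_measurable_integrable)
    show "AE x in lborel. h x = indicator ?A x *\<^sub>R h x + indicator ?B x *\<^sub>R h x"
      using AE_lborel_singleton[of 0] by eventually_elim (auto split: split_indicator)
  qed
  also have "\<dots> = (LINT x|lborel. indicator ?A x *\<^sub>R h x) + (LINT x|lborel. indicator ?B x *\<^sub>R h x)"
    by (rule Bochner_Integration.integral_add[OF iA iB])
  also have "(LINT x|lborel. indicator ?B x *\<^sub>R h x) = (LINT x|lborel. indicator ?B (- x) *\<^sub>R h (- x))"
    by (rule integral_reflect[where f="\<lambda>x. indicator ?B x *\<^sub>R h x", symmetric])
  also have "\<dots> = (LINT x|lborel. indicator ?A x *\<^sub>R h x)"
    by (rule arg_cong[where f="integral\<^sup>L lborel"], rule ext) (auto simp: ev split: split_indicator)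
  finally have "(LINT x|lborel. h x) = 2 *\<^sub>R (LINT x|lborel. indicator ?A x *\<^sub>R h x)"
    by (simp add: scaleR_2)
  then show ?thesis by (simp add: set_lebesgue_integral_def)
qed



lemma smooth_D: "smooth_mat F \<Longrightarrow> (vderiv_iter i F has_vector_derivative vderiv_iter (Suc i) F x) (at x)"
  unfolding smooth_mat_def by blast

lemma vd_add:
  assumes "mat_poly F" "mat_poly G"
  shows "vderiv_iter i (\<lambda>x. F x + G x) = (\<lambda>x. vderiv_iter i F x + vderiv_iter i G x)"
proof (induction i)
  case 0 then show ?case by (simp add: vderiv_iter_def)
next
  case (Suc i)
  show ?case unfolding vderiv_Suc Suc
  proof (rule ext, rule vector_derivative_at)
    fix x
    show "((\<lambda>x. vderiv_iter i F x + vderiv_iter i G x) has_vector_derivative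
         vector_derivative (vderiv_iter i F) (at x) + vector_derivative (vderiv_iter i G) (at x)) (at x)"
      using has_vector_derivative_add[OF smooth_D[OF mat_poly_smooth[OF assms(1)]] smooth_D[OF mat_poly_smooth[OF assms(2)]]]
      unfolding vderiv_Suc by blast
  qed
qed

lemma vd_ml:
  assumes "mat_poly F"
  shows "vderiv_iter i (\<lambda>x. (A::complex^'n^'n) ** F x) = (\<lambda>x. A ** vderiv_iter i F x)"
proof (induction i)
  case 0 then show ?case by (simp add: vderiv_iter_def)
next
  case (Suc i)
  show ?case unfolding vderiv_Suc Suc
  proof (rule ext, rule vector_derivative_at)
    fix x
    show "((\<lambda>x. A ** vderiv_iter i F x) has_vector_derivative A ** vector_derivative (vderiv_iter i F) (at x)) (at x)"
      using bounded_linear.has_vector_derivative[OF bl_ml smooth_D[OF mat_poly_smooth[OF assms(1)]]]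
      unfolding vderiv_Suc by blast
  qed
qed

lemma vd_zero: "vderiv_iter i (\<lambda>x. 0) = (\<lambda>x. 0)"
  using vderiv_gen[where F="\<lambda>x. 0" and S="{}::nat set" and e="\<lambda>s. 0" and C="\<lambda>s. 0"] by simp

lemma vd_sum:
  assumes "finite S" "\<And>m. m \<in> S \<Longrightarrow> mat_poly (F m)"
  shows "vderiv_iter i (\<lambda>x. \<Sum>m\<in>S. F m x) = (\<lambda>x. \<Sum>m\<in>S. vderiv_iter i (F m) x)"
  using assms
proof (induction S rule: finite_induct)
  case empty then show ?case by (simp add: vd_zero)
next
  case (insert a S)
  have "vderiv_iter i (\<lambda>x. \<Sum>m\<in>insert a S. F m x) = vderiv_iter i (\<lambda>x. F a x + (\<Sum>m\<in>S. F m x))"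
    using insert by simp
  also have "\<dots> = (\<lambda>x. vderiv_iter i (F a) x + vderiv_iter i (\<lambda>x. \<Sum>m\<in>S. F m x) x)"
    by (rule vd_add) (use insert in \<open>auto intro: mat_poly_sum\<close>)
  also have "\<dots> = (\<lambda>x. \<Sum>m\<in>insert a S. vderiv_iter i (F m) x)"
    using insert by simp
  finally show ?case .
qed

lemma dop_lin:
  assumes "finite S" "\<And>m. m \<in> S \<Longrightarrow> mat_poly (F m)"
  shows "dop_apply k G (\<lambda>x. \<Sum>m\<in>S. (A m::complex^'n^'n) ** F m x) x = (\<Sum>m\<in>S. A m ** dop_apply k G (F m) x)"
proof -
  have "vderiv_iter i (\<lambda>x. \<Sum>m\<in>S. A m ** F m x) x = (\<Sum>m\<in>S. A m ** vderiv_iter i (F m) x)" for i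
  proof -
    have "vderiv_iter i (\<lambda>x. \<Sum>m\<in>S. A m ** F m x) x = (\<Sum>m\<in>S. vderiv_iter i (\<lambda>x. A m ** F m x) x)"
      using vd_sum[OF assms(1), of "\<lambda>m x. A m ** F m x" i] mat_poly_mult[OF mat_poly_const assms(2)] by simp
    also have "\<dots> = (\<Sum>m\<in>S. A m ** vderiv_iter i (F m) x)"
      by (rule sum.cong[OF refl]) (simp add: vd_ml[OF assms(2)])
    finally show ?thesis .
  qed
  then show ?thesis unfolding dop_apply_def
    by (simp add: mm_sum_left mm_sum_right matrix_mul_assoc sum.swap[of _ "{..k}"])
qed

lemma sum_parity: "(\<Sum>i\<le>2*(n::nat)+1. f i) = (\<Sum>l\<le>n. f (2*l) + f (2*l+1))"
  by (induction n) (simp_all add: sum.atMost_Suc add.assoc)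

lemma odd_poly_rep:
  assumes Q: "\<forall>x. Q x = (\<Sum>i\<le>2*n+1. (x ^ i) *\<^sub>R (C i::complex^'n^'n))" and odd: "\<forall>x. Q (- x) = - Q x"
  shows "Q x = (\<Sum>l\<le>n. (x ^ (2*l+1)) *\<^sub>R C (2*l+1))"
proof -
  have "Q x - Q (- x) = 2 *\<^sub>R Q x" using odd by (simp add: scaleR_2)
  then have "Q x = (1/2) *\<^sub>R (Q x - Q (- x))" by simp
  also have "\<dots> = (\<Sum>i\<le>2*n+1. (1/2) *\<^sub>R ((x ^ i) *\<^sub>R C i - ((- x) ^ i) *\<^sub>R C i))"
    unfolding Q[rule_format] by (simp only: sum_subtractf[symmetric] scaleR_sum_right)
  also have "\<dots> = (\<Sum>l\<le>n. (x ^ (2*l+1)) *\<^sub>R C (2*l+1))"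
    unfolding sum_parity
  proof (rule sum.cong[OF refl])
    fix l
    have e1: "(- x) ^ (2*l) = x ^ (2*l)" by (simp add: power_mult)
    have e2: "(- x) ^ (2*l+1) = - (x ^ (2*l+1))" by (simp add: power_mult)
    have e3: "x ^ (2*l+1) *\<^sub>R C (2*l+1) - (- (x ^ (2*l+1))) *\<^sub>R C (2*l+1) = 2 *\<^sub>R (x ^ (2*l+1) *\<^sub>R C (2*l+1))"
      by (simp only: diff_minus_eq_add scaleR_minus_left) (rule scaleR_2[symmetric])
    show "(1/2) *\<^sub>R ((x ^ (2*l)) *\<^sub>R C (2*l) - ((- x) ^ (2*l)) *\<^sub>R C (2*l)) +
          (1/2) *\<^sub>R ((x ^ (2*l+1)) *\<^sub>R C (2*l+1) - ((- x) ^ (2*l+1)) *\<^sub>R C (2*l+1)) =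
          (x ^ (2*l+1)) *\<^sub>R C (2*l+1)"
      unfolding e1 e2 e3 by simp
  qed
  finally show ?thesis .
qed



lemma adj_neg: "mat_adj (- A) = - mat_adj A"
  by (simp add: mat_adj_def vec_eq_iff)
lemma mm_neg_left: "(- (A::complex^'n^'n)) ** (B::complex^'n^'n) = - (A ** B)"
  by (simp add: matrix_matrix_mult_def vec_eq_iff sum_negf)
lemma mm_neg_right: "(A::complex^'n^'n) ** (- (B::complex^'n^'n)) = - (A ** B)"
  by (simp add: matrix_matrix_mult_def vec_eq_iff sum_negf)

theorem theorem4p5:
  fixes Z W U :: "real \<Rightarrow> complex^'n^'n"
    and k kE kT :: nat
    and G GE GT :: "nat \<Rightarrow> real \<Rightarrow> complex^'n^'n"
  assumes W_def: "\<forall>x. W x = exp (- (x ^ 2)) *\<^sub>R Z x"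
    and W_weight: "weight_matrix W UNIV"
    and W_even: "\<forall>x. W x = W (- x)"
    and U_def: "\<forall>y>0. U y = (sqrt y * exp (- y)) *\<^sub>R Z (sqrt y)"
    and U_weight: "weight_matrix U {0<..}"
    and D_in: "in_DW W UNIV k G"
    and E_def: "\<forall>F x. smooth_mat F \<and> x \<noteq> 0 \<longrightarrow>
                  x *\<^sub>R dop_apply kE GE F x = dop_apply k G (\<lambda>t. t *\<^sub>R F t) x"
    and Et_def: "\<forall>F y. smooth_mat F \<and> 0 < y \<longrightarrow>
                  dop_apply kE GE F (sqrt y) = dop_apply kT GT (\<lambda>t. F (sqrt t)) y"
  shows "in_DW U {0<..} kT GT"
proof -
  have mom: "\<forall>k. set_integrable lborel UNIV (\<lambda>x. (x ^ k) *\<^sub>R W x)"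
    using W_weight unfolding weight_matrix_def by blast
  have pd: "AE x in lborel. pos_def_mat (W x)"
    using W_weight unfolding weight_matrix_def by simp
  have momU: "\<forall>k. set_integrable lborel {0<..} (\<lambda>x. (x ^ k) *\<^sub>R U x)"
    using U_weight unfolding weight_matrix_def by blast
  have Gp: "mat_poly (G i)" if ik: "i \<le> k" for i
  proof -
    obtain p where "mat_poly p" "\<forall>x\<in>UNIV. G i x = p x" using D_in ik unfolding in_DW_def by blast
    moreover then have "G i = p" by auto
    ultimately show ?thesis by simp
  qed
  obtain P where P: "monic_OP W UNIV P" and eig: "\<forall>n. \<exists>\<Lambda>. \<forall>x\<in>UNIV. dop_apply k G (P n) x = \<Lambda> ** P n x"
    using D_in unfolding in_DW_def by blast
  obtain L where L: "\<forall>n x. dop_apply k G (P n) x = L n ** P n x"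
    using choice[OF eig[simplified]] by blast
  have Pm: "\<forall>m. monic_mat_poly (P m) m" and Po: "\<And>a b. a \<noteq> b \<Longrightarrow> mip W UNIV (P a) (P b) = 0"
    using P unfolding monic_OP_def by auto
  have PP: "mat_poly (P m)" for m using monic_poly Pm by blast
  have par: "P n (- x) = ((-1) ^ n) *\<^sub>R P n x" for n x
    by (rule parity[OF pd mom W_even P])
  define Pc where "Pc n = (SOME C. C n = mat 1 \<and> (\<forall>x. P n x = (\<Sum>i\<le>n. (x ^ i) *\<^sub>R C i)))" for n
  have Pc: "Pc n n = mat 1" "\<forall>x. P n x = (\<Sum>i\<le>n. (x ^ i) *\<^sub>R Pc n i)" for n
    using someI_ex[OF monic_rep[OF Pm[rule_format, of n]]] unfolding Pc_def[symmetric] by auto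
  define R where "R n y = (\<Sum>l\<le>n. (y ^ l) *\<^sub>R Pc (2*n+1) (2*l+1))" for n y
  have RP: "P (2*n+1) x = x *\<^sub>R R n (x ^ 2)" for n x
  proof -
    have "P (2*n+1) x = (\<Sum>l\<le>n. (x ^ (2*l+1)) *\<^sub>R Pc (2*n+1) (2*l+1))"
      by (rule odd_poly_rep[OF Pc(2)]) (simp add: par)
    also have "\<dots> = x *\<^sub>R R n (x ^ 2)"
      unfolding R_def scaleR_sum_right by (rule sum.cong[OF refl]) (simp add: power_mult[symmetric] mult.commute)
    finally show ?thesis .
  qed
  have Rp: "mat_poly (R n)" for n
    unfolding R_def[abs_def] by (rule mat_poly_gen[where S="{..n}" and e=id]) auto
  have R2: "R n (x ^ 2) = (\<Sum>l\<le>n. (x ^ (2 * l)) *\<^sub>R Pc (2*n+1) (2*l+1))" for n x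
    unfolding R_def by (simp add: power_mult)
  have eigR: "\<forall>y\<in>{0<..}. dop_apply kT GT (R n) y = L (2*n+1) ** R n y" for n
  proof
    fix y :: real assume y: "y \<in> {0<..}"
    define F where "F x = R n (x ^ 2)" for x
    have Fs: "smooth_mat F" unfolding F_def
      by (rule smooth_gen[where S="{..n}" and e="\<lambda>l. 2 * l" and C="\<lambda>l. Pc (2*n+1) (2*l+1)"]) (simp add: R2)
    have tF: "(\<lambda>t. t *\<^sub>R F t) = P (2*n+1)" unfolding F_def by (rule ext) (rule RP[symmetric])
    have FE: "dop_apply kE GE F x = L (2*n+1) ** F x" if "x \<noteq> 0" for x
    proof -
      have "x *\<^sub>R dop_apply kE GE F x = dop_apply k G (\<lambda>t. t *\<^sub>R F t) x"
        using E_def Fs that by blast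
      also have "\<dots> = L (2*n+1) ** P (2*n+1) x" unfolding tF using L by blast
      also have "\<dots> = x *\<^sub>R (L (2*n+1) ** F x)" unfolding F_def RP by (simp add: mm_scaleR_right)
      finally show ?thesis using that by simp
    qed
    have sy: "sqrt y \<noteq> 0" using y by simp
    have "dop_apply kT GT (R n) y = dop_apply kT GT (\<lambda>t. F (sqrt t)) y"
      by (rule dop_local[where S="{0<..}", symmetric]) (use y in \<open>auto simp: F_def\<close>)
    also have "\<dots> = dop_apply kE GE F (sqrt y)" using Et_def Fs y by simp
    also have "\<dots> = L (2*n+1) ** R n y" using FE[OF sy] y by (simp add: F_def)
    finally show "dop_apply kT GT (R n) y = L (2*n+1) ** R n y" .
  qed
  have orthR: "mip U {0<..} (R n) (R m) = 0" if nm: "n \<noteq> m" for n m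
  proof -
    define h where "h x = P (2*n+1) x ** W x ** mat_adj (P (2*m+1) x)" for x
    have hi: "integrable lborel h"
      using poly_integrable[OF mom PP PP, of "2*n+1" "2*m+1"] unfolding set_integrable_def h_def[abs_def] by simp
    have m1: "(-1::real) ^ (2*j+1) = -1" for j by simp
    have hev: "h (- x) = h x" for x
      unfolding h_def par m1 using W_even[rule_format, of x]
      by (simp add: adj_neg mm_neg_left mm_neg_right)
    have intU: "set_integrable lborel {0<..} (\<lambda>y. R n y ** U y ** mat_adj (R m y))"
      by (rule poly_integrable[OF momU Rp Rp])
    have "mip U {0<..} (R n) (R m) = (LINT y:{0<..}|lborel. R n y ** U y ** mat_adj (R m y))"
      unfolding mip_def ..
    also have "\<dots> = (LINT x:{0<..}|lborel. (2 * x) *\<^sub>R (R n (x ^ 2) ** U (x ^ 2) ** mat_adj (R m (x ^ 2))))"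
      by (rule subst_sq[OF intU])
    also have "\<dots> = (LINT x:{0<..}|lborel. 2 *\<^sub>R h x)"
    proof (rule set_lebesgue_integral_cong)
      show "({0<..}::real set) \<in> sets lborel" by simp
      show "\<forall>x. x \<in> {0<..} \<longrightarrow> (2 * x) *\<^sub>R (R n (x ^ 2) ** U (x ^ 2) ** mat_adj (R m (x ^ 2))) = 2 *\<^sub>R h x"
      proof (intro allI impI)
        fix x :: real assume x: "x \<in> {0<..}"
        then have sx: "sqrt (x ^ 2) = x" by simp
        have "U (x ^ 2) = x *\<^sub>R W x" using U_def[rule_format, of "x ^ 2"] x W_def sx by simp
        then show "(2 * x) *\<^sub>R (R n (x ^ 2) ** U (x ^ 2) ** mat_adj (R m (x ^ 2))) = 2 *\<^sub>R h x"
          unfolding h_def RP by (simp add: mm_scaleR_left mm_scaleR_right adj_scaleR mult_ac)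
      qed
    qed
    also have "\<dots> = 2 *\<^sub>R (LINT x:{0<..}|lborel. h x)" by simp
    also have "\<dots> = (LINT x|lborel. h x)" unfolding half_integral[OF hi hev] by simp
    also have "\<dots> = mip W UNIV (P (2*n+1)) (P (2*m+1))" unfolding mip_UNIV h_def ..
    also have "\<dots> = 0" using Po nm by simp
    finally show ?thesis .
  qed
  have T: "\<exists>q. mat_poly q \<and> (\<forall>y\<in>{0<..}. (\<Sum>i\<le>kT. (fall j i * y ^ (j - i)) *\<^sub>R GT i y) = q y)" for j
  proof -
    define d where "d = 2*j+1"
    define Q where "Q t = (t ^ d) *\<^sub>R (mat 1::complex^'n^'n)" for t
    have Qle: "mat_poly_le Q d"
    proof -
      have "Q x = (\<Sum>i\<le>d. (x ^ i) *\<^sub>R (if i = d then mat 1 else 0))" for x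
      proof -
        have "(\<Sum>i\<le>d. (x ^ i) *\<^sub>R (if i = d then (mat 1::complex^'n^'n) else 0)) =
            (\<Sum>i\<le>d. if i = d then (x ^ i) *\<^sub>R mat 1 else 0)"
          by (rule sum.cong) auto
        then show ?thesis unfolding Q_def by simp
      qed
      then show ?thesis unfolding mat_poly_le_def by (intro exI[where x="\<lambda>i. if i = d then mat 1 else 0"]) blast
    qed
    then have Qp: "mat_poly Q" unfolding mat_poly_def by blast
    obtain A where A: "\<forall>x. Q x = (\<Sum>m\<le>d. A m ** P m x)" using expand[OF Pm Qle] by blast
    define A' where "A' m = ((1 - (-1) ^ m) / 2) *\<^sub>R A m" for m
    have Qodd: "Q (- x) = - Q x" for x unfolding Q_def d_def by simp
    have QA': "Q x = (\<Sum>m\<le>d. A' m ** P m x)" for x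
    proof -
      have "Q x - Q (- x) = 2 *\<^sub>R Q x" using Qodd by (simp add: scaleR_2)
      then have "Q x = (1/2) *\<^sub>R (Q x - Q (- x))" by simp
      also have "\<dots> = (\<Sum>m\<le>d. (1/2) *\<^sub>R (A m ** P m x - A m ** P m (- x)))"
        unfolding A[rule_format] by (simp only: sum_subtractf[symmetric] scaleR_sum_right)
      also have "\<dots> = (\<Sum>m\<le>d. A' m ** P m x)"
      proof (rule sum.cong[OF refl])
        fix m
        show "(1/2) *\<^sub>R (A m ** P m x - A m ** P m (- x)) = A' m ** P m x"
          unfolding par A'_def mm_scaleR_left mm_scaleR_right
          by (simp add: algebra_simps diff_divide_distrib)
      qed
      finally show ?thesis .
    qed
    define h where "h x = dop_apply k G Q x" for x
    have hP: "h x = (\<Sum>m\<le>d. A' m ** (L m ** P m x))" for x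
    proof -
      have "Q = (\<lambda>x. \<Sum>m\<le>d. A' m ** P m x)" using QA' by auto
      then have "h x = (\<Sum>m\<le>d. A' m ** dop_apply k G (P m) x)"
        unfolding h_def by (simp add: dop_lin PP)
      then show ?thesis using L by simp
    qed
    have sgn: "((-1::real) ^ m * ((1 - (-1) ^ m) / 2)) = - ((1 - (-1) ^ m) / 2)" for m :: nat
      by (cases "even m") auto
    have hodd: "h (- x) = - h x" for x
    proof -
      have "h (- x) = (\<Sum>m\<le>d. - (A' m ** (L m ** P m x)))"
        unfolding hP par
      proof (rule sum.cong[OF refl])
        fix m
        show "A' m ** (L m ** (-1) ^ m *\<^sub>R P m x) = - (A' m ** (L m ** P m x))"
          unfolding A'_def mm_scaleR_left mm_scaleR_right scaleR_scaleR sgn by simp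
      qed
      then show ?thesis unfolding hP by (simp add: sum_negf)
    qed
    have hp: "mat_poly h" unfolding h_def[abs_def] by (rule mat_poly_dop[OF Gp Qp])
    obtain n C where hC: "\<forall>x. h x = (\<Sum>i\<le>n. (x ^ i) *\<^sub>R C i)" using mat_poly_rep[OF hp] by blast
    define C' where "C' i = (if i \<le> n then C i else 0)" for i
    have hC': "\<forall>x. h x = (\<Sum>i\<le>2*n+1. (x ^ i) *\<^sub>R C' i)"
    proof
      fix x
      have "h x = (\<Sum>i\<le>n. (x ^ i) *\<^sub>R C i)" using hC by blast
      also have "\<dots> = (\<Sum>i\<le>2*n+1. (x ^ i) *\<^sub>R (if i \<le> n then C i else 0))" by (rule sum_pad) simp
      finally show "h x = (\<Sum>i\<le>2*n+1. (x ^ i) *\<^sub>R C' i)" unfolding C'_def .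
    qed
    define q where "q y = (\<Sum>l\<le>n. (y ^ l) *\<^sub>R C' (2*l+1))" for y
    have qp: "mat_poly q" unfolding q_def[abs_def] by (rule mat_poly_gen[where S="{..n}" and e=id]) auto
    have hq: "h x = x *\<^sub>R q (x ^ 2)" for x
    proof -
      have "h x = (\<Sum>l\<le>n. (x ^ (2*l+1)) *\<^sub>R C' (2*l+1))"
        by (rule odd_poly_rep[OF hC']) (simp add: hodd)
      also have "\<dots> = x *\<^sub>R q (x ^ 2)"
        unfolding q_def scaleR_sum_right by (rule sum.cong[OF refl]) (simp add: power_mult[symmetric] mult.commute)
      finally show ?thesis .
    qed
    define F where "F x = (x ^ (2*j)) *\<^sub>R (mat 1::complex^'n^'n)" for x
    have Fs: "smooth_mat F" unfolding F_def
      by (rule smooth_gen[where S="{0::nat}" and e="\<lambda>_. 2*j" and C="\<lambda>_. mat 1"]) simp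
    have tF: "(\<lambda>t. t *\<^sub>R F t) = Q" unfolding F_def Q_def d_def by (rule ext) simp
    have FE: "dop_apply kE GE F x = q (x ^ 2)" if "x \<noteq> 0" for x
    proof -
      have "x *\<^sub>R dop_apply kE GE F x = dop_apply k G (\<lambda>t. t *\<^sub>R F t) x"
        using E_def Fs that by blast
      also have "\<dots> = x *\<^sub>R q (x ^ 2)" unfolding tF h_def[symmetric] hq ..
      finally show ?thesis using that by simp
    qed
    have vj: "vderiv_iter i (\<lambda>t. (t ^ j) *\<^sub>R (mat 1::complex^'n^'n)) y = (fall j i * y ^ (j - i)) *\<^sub>R mat 1" for i y
      using vderiv_gen[where F="\<lambda>t. (t ^ j) *\<^sub>R (mat 1::complex^'n^'n)" and S="{0::nat}" and e="\<lambda>_. j" and C="\<lambda>_. mat 1"]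
      by simp
    have "(\<Sum>i\<le>kT. (fall j i * y ^ (j - i)) *\<^sub>R GT i y) = q y" if y: "y \<in> {0<..}" for y
    proof -
      have "(\<Sum>i\<le>kT. (fall j i * y ^ (j - i)) *\<^sub>R GT i y) = dop_apply kT GT (\<lambda>t. (t ^ j) *\<^sub>R mat 1) y"
        unfolding dop_apply_def vj by (simp add: mm_scaleR_left)
      also have "\<dots> = dop_apply kT GT (\<lambda>t. F (sqrt t)) y"
        by (rule dop_local[where S="{0<..}"]) (use y in \<open>auto simp: F_def power_mult real_sqrt_pow2\<close>)
      also have "\<dots> = dop_apply kE GE F (sqrt y)" using Et_def Fs y by simp
      also have "\<dots> = q y" using FE[of "sqrt y"] y by simp
      finally show ?thesis .
    qed
    then show ?thesis using qp by blast
  qed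
  have GTp: "\<exists>p. mat_poly p \<and> (\<forall>x\<in>{0<..}. GT i x = p x)" if "i \<le> kT" for i
    using that
  proof (induction i rule: less_induct)
    case (less j)
    have "\<forall>i. \<exists>p. i < j \<longrightarrow> mat_poly p \<and> (\<forall>x\<in>{0<..}. GT i x = p x)"
      using less by (meson less_imp_le order.trans)
    then obtain ps where ps: "\<forall>i. i < j \<longrightarrow> mat_poly (ps i) \<and> (\<forall>x\<in>{0<..}. GT i x = ps i x)"
      by (metis (no_types, lifting) choice)
    obtain q where qp: "mat_poly q" and q: "\<forall>y\<in>{0<..}. (\<Sum>i\<le>kT. (fall j i * y ^ (j - i)) *\<^sub>R GT i y) = q y"
      using T[of j] by blast
    define p where "p y = (1 / fall j j) *\<^sub>R (q y - (\<Sum>i<j. (y ^ (j - i)) *\<^sub>R (fall j i *\<^sub>R ps i y)))" for y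
    have pp: "mat_poly p" unfolding p_def[abs_def]
      by (intro mat_poly_scaleR mat_poly_diff qp mat_poly_sum mat_poly_xpow) (use ps in auto)
    have "GT j y = p y" if y: "y \<in> {0<..}" for y
    proof -
      let ?f = "\<lambda>i. (fall j i * y ^ (j - i)) *\<^sub>R GT i y"
      have "(\<Sum>i\<le>kT. ?f i) = (\<Sum>i\<le>j. ?f i)"
        by (rule sum.mono_neutral_right) (use less.prems in \<open>auto simp: fall_gt\<close>)
      also have "\<dots> = (\<Sum>i<j. ?f i) + ?f j"
        by (simp add: lessThan_Suc_atMost[symmetric])
      also have "(\<Sum>i<j. ?f i) = (\<Sum>i<j. (y ^ (j - i)) *\<^sub>R (fall j i *\<^sub>R ps i y))"
        by (rule sum.cong[OF refl]) (use ps y in \<open>auto simp: mult.commute\<close>)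
      finally have "q y = (\<Sum>i<j. (y ^ (j - i)) *\<^sub>R (fall j i *\<^sub>R ps i y)) + fall j j *\<^sub>R GT j y"
        using q y by simp
      then have "fall j j *\<^sub>R GT j y = q y - (\<Sum>i<j. (y ^ (j - i)) *\<^sub>R (fall j i *\<^sub>R ps i y))"
        by (simp add: algebra_simps)
      then have "(1 / fall j j) *\<^sub>R (fall j j *\<^sub>R GT j y) = (1 / fall j j) *\<^sub>R (q y - (\<Sum>i<j. (y ^ (j - i)) *\<^sub>R (fall j i *\<^sub>R ps i y)))"
        by (rule arg_cong)
      moreover have "fall j j \<noteq> 0" using fall_self_pos[of j] by simp
      ultimately show ?thesis unfolding p_def by (simp only: scaleR_scaleR) simp
    qed
    then show ?case using pp by blast
  qed
  have "monic_OP U {0<..} R"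
    unfolding monic_OP_def
  proof (intro conjI allI impI)
    fix n show "monic_mat_poly (R n) n" unfolding monic_mat_poly_def R_def
      by (intro exI[where x="\<lambda>l. Pc (2*n+1) (2*l+1)"]) (simp add: Pc(1))
  next
    fix n m :: nat assume "n \<noteq> m" then show "mip U {0<..} (R n) (R m) = 0" by (rule orthR)
  qed
  then show ?thesis unfolding in_DW_def using GTp eigR by blast
qed

end
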